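(* Let $\mathbf s\in\mathbb N$, $\gamma\ge0$ with $\mathbf s+\gamma>\frac12$. There exists a strictly increasing function $C:\mathbb R_{\ge0}\times\mathbb R_{\ge0}\to\mathbb R_{\ge0}$ such that for every $\delta\in(0,1)$, $R\in[1,+\infty]$, $N\in\mathbb N^+\cup\{+\infty\}$, every $\tau=T/K$, every $n\in\mathbb N$ with $n\le K-1$ and all $z,w\in\pi_NL^2$, almost surely $$\|\Phi_{n,\tau}(w)-\Phi_{n,\tau}(z)\|_{H^{\mathbf s}}\le\big(1+\tau\,C(\|w\|_{H^{\mathbf s+\gamma}},\|z\|_{H^{\mathbf s+\gamma}})\big)\|w-z\|_{H^{\mathbf s}}.$$
   Context: $\mathbb T=\mathbb R/(2\pi\mathbb Z)$, $\hat f_k$ Fourier coefficients, $\|f\|_{H^r}^2=\sum_k(1+|k|^{2r})|\hat f_k|^2$; $\pi_N$ the Fourier projection onto $|k|\le N$. $B$ standard Brownian motion, $B^R$ is $B(t)$ clipped to $[-R\sqrt t,R\sqrt t]$, $B^{\delta,R}(t)=B^R(\lfloor t\rfloor_\delta)+\frac{t-\lfloor t\rfloor_\delta}{\delta}(B^R(\lfloor t\rfloor_\delta+\delta)-B^R(\lfloor t\rfloor_\delta))$. $T>0$, $K\in\mathbb N^+$, $\tau=T/K$, $t_n=n\tau$, $\lambda\ne0$ real. Define $I_{n,\tau}(k^2)=\int_0^\tau e^{2\mathbf ik^2(B^{\delta,R}(t_n+s)-B^{\delta,R}(t_n))}ds$ and the one-step map (SDLRI) $\Phi_{n,\tau}$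 on $\pi_NL^2$ by, for $|k|\le N$, $$\widehat{\Phi_{n,\tau}(z)}_k=e^{-\mathbf i(B^{\delta,R}(t_n+\tau)-B^{\delta,R}(t_n))k^2}\Big(\hat z_k+\mathbf i\lambda\!\!\sum_{\substack{k+k_1=k_2+k_3\\|k_1|,|k_2|,|k_3|\le N}}\!\!I_{n,\tau}(k_1^2)\,\overline{\hat z_{k_1}}\hat z_{k_2}\hat z_{k_3}\Big),$$ and $\widehat{\Phi_{n,\tau}(z)}_k=0$ for $|k|>N$. *)

theory Defs
  imports "HOL-Probability.Probability" "HOL-Library.Extended_Nat"
begin

text \<open>Standard Brownian motion on a probability space M, given as a family of sample
paths B omega : real -> real (only t >= 0 is relevant).\<close>
definition brownian_motion :: "'a measure \<Rightarrow> ('a \<Rightarrow> real \<Rightarrow> real) \<Rightarrow> bool" where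
  "brownian_motion M B \<longleftrightarrow> prob_space M \<and>
     (\<forall>t. (\<lambda>\<omega>. B \<omega> t) \<in> borel_measurable M) \<and>
     (\<forall>\<omega>\<in>space M. B \<omega> 0 = 0 \<and> continuous_on {0..} (B \<omega>)) \<and>
     (\<forall>s t. 0 \<le> s \<and> s < t \<longrightarrow>
        distributed M lborel (\<lambda>\<omega>. B \<omega> t - B \<omega> s)
          (\<lambda>x. ennreal (normal_density 0 (sqrt (t - s)) x))) \<and>
     (\<forall>(ts :: nat \<Rightarrow> real) m. 0 \<le> ts 0 \<and> strict_mono ts \<longrightarrow>
        prob_space.indep_vars M (\<lambda>_. borel)
          (\<lambda>i \<omega>. B \<omega> (ts (Suc i)) - B \<omega> (ts i)) {..<m})"

definition clipB :: "ereal \<Rightarrow> (real \<Rightarrow> real) \<Rightarrow> real \<Rightarrow> real" where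
  "clipB R b t = (case R of ereal r \<Rightarrow> max (- r * sqrt t) (min (r * sqrt t) (b t)) | _ \<Rightarrow> b t)"

definition floor_delta :: "real \<Rightarrow> real \<Rightarrow> real" where
  "floor_delta \<delta> t = \<delta> * of_int \<lfloor>t / \<delta>\<rfloor>"

definition interpB :: "real \<Rightarrow> ereal \<Rightarrow> (real \<Rightarrow> real) \<Rightarrow> real \<Rightarrow> real" where
  "interpB \<delta> R b t = (let f = floor_delta \<delta> t in
      clipB R b f + (t - f) / \<delta> * (clipB R b (f + \<delta>) - clipB R b f))"

definition I_int :: "real \<Rightarrow> ereal \<Rightarrow> (real \<Rightarrow> real) \<Rightarrow> real \<Rightarrow> real \<Rightarrow> real \<Rightarrow> complex" where
  "I_int \<delta> R b tn \<tau> m =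
     integral {0..\<tau>} (\<lambda>s. cis (2 * m * (interpB \<delta> R b (tn + s) - interpB \<delta> R b tn)))"

definition inN :: "enat \<Rightarrow> int \<Rightarrow> bool" where
  "inN N k \<longleftrightarrow> enat (nat \<bar>k\<bar>) \<le> N"

text \<open>Elements of pi_N L^2, represented by their Fourier coefficients (int => complex).\<close>
definition in_piN :: "enat \<Rightarrow> (int \<Rightarrow> complex) \<Rightarrow> bool" where
  "in_piN N z \<longleftrightarrow> (\<forall>k. \<not> inN N k \<longrightarrow> z k = 0)"

text \<open>Sobolev weight |k|^{2r}, with the convention 0^0 = 1.\<close>
definition hs_weight :: "real \<Rightarrow> int \<Rightarrow> real" where
  "hs_weight r k = (if k = 0 \<and> r = 0 then 1 else \<bar>real_of_int k\<bar> powr (2 * r))"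

definition hs_summable :: "real \<Rightarrow> (int \<Rightarrow> complex) \<Rightarrow> bool" where
  "hs_summable r f \<longleftrightarrow> (\<lambda>k. (1 + hs_weight r k) * (cmod (f k))\<^sup>2) summable_on UNIV"

definition hs_norm :: "real \<Rightarrow> (int \<Rightarrow> complex) \<Rightarrow> real" where
  "hs_norm r f = sqrt (\<Sum>\<^sub>\<infinity>k. (1 + hs_weight r k) * (cmod (f k))\<^sup>2)"

definition Phi :: "real \<Rightarrow> ereal \<Rightarrow> (real \<Rightarrow> real) \<Rightarrow> real \<Rightarrow> enat \<Rightarrow> real \<Rightarrow> real
                    \<Rightarrow> (int \<Rightarrow> complex) \<Rightarrow> (int \<Rightarrow> complex)" where
  "Phi \<delta> R b lam N tn \<tau> z = (\<lambda>k. if inN N k then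
      cis (- (interpB \<delta> R b (tn + \<tau>) - interpB \<delta> R b tn) * (of_int k)\<^sup>2) *
      (z k + \<i> * complex_of_real lam *
        (\<Sum>\<^sub>\<infinity>(k1, k2, k3) \<in> {(k1, k2, k3). k + k1 = k2 + k3 \<and> inN N k1 \<and> inN N k2 \<and> inN N k3}.
            I_int \<delta> R b tn \<tau> ((of_int k1)\<^sup>2) * cnj (z k1) * z k2 * z k3))
    else 0)"

end

theory Submission
  imports Defs
begin

lemma I_int_bound:
  assumes "0 \<le> \<tau>"
  shows "cmod (I_int \<delta> R b tn \<tau> m) \<le> \<tau>"
proof (cases "(\<lambda>s. cis (2 * m * (interpB \<delta> R b (tn + s) - interpB \<delta> R b tn))) integrable_on {0..\<tau>}")
  case True
  then obtain i where i: "((\<lambda>s. cis (2 * m * (interpB \<delta> R b (tn + s) - interpB \<delta> R b tn))) has_integral i) (cbox 0 \<tau>)"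
    by (auto simp: integrable_on_def)
  have "norm i \<le> 1 * Henstock_Kurzweil_Integration.content (cbox 0 \<tau>)"
    by (rule has_integral_bound[OF _ i]) auto
  moreover have "I_int \<delta> R b tn \<tau> m = i" using i unfolding I_int_def
    by (simp add: integral_unique)
  ultimately show ?thesis using assms by simp
next
  case False
  then show ?thesis using assms by (simp add: I_int_def not_integrable_integral)
qed

definition Wt :: "real \<Rightarrow> int \<Rightarrow> real" where
  "Wt r k = 1 + hs_weight r k"

lemma hs_weight_nonneg: "0 \<le> hs_weight r k"
  by (simp add: hs_weight_def)

lemma Wt_ge1: "1 \<le> Wt r k"
  by (simp add: Wt_def hs_weight_nonneg)

lemma Wt_nonneg: "0 \<le> Wt r k"
  using Wt_ge1[of r k] by simp

lemma hs_weight_nat: "hs_weight (real s) k = (real_of_int k) ^ (2 * s)"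
proof (cases "k = 0")
  case True
  then show ?thesis by (cases "s = 0") (auto simp: hs_weight_def)
next
  case False
  then have "\<bar>real_of_int k\<bar> powr (2 * real s) = \<bar>real_of_int k\<bar> ^ (2 * s)"
    by (simp add: powr_realpow[symmetric])
  also have "\<dots> = (real_of_int k) ^ (2 * s)"
    by (simp add: power_mult power2_abs)
  finally show ?thesis using False by (simp add: hs_weight_def)
qed

lemma Wt_abs: "Wt r (- k) = Wt r k"
  by (simp add: Wt_def hs_weight_def)

lemma inv_Wt_summable:
  assumes r: "r > 1/2"
  shows "(\<lambda>k. 1 / Wt r k) summable_on (UNIV::int set)"
proof -
  define g where "g n = 1 / Wt r (int n)" for n :: nat
  have s1: "summable (\<lambda>n::nat. real n powr (- 2 * r))"
    using r by (subst summable_real_powr_iff) simp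
  have "summable g"
  proof (rule summable_comparison_test'[OF s1, of 1])
    fix n :: nat assume n: "1 \<le> n"
    have pos: "0 < real n powr (2 * r)" using n by simp
    have "norm (g n) = 1 / (1 + real n powr (2 * r))"
      using n by (simp add: g_def Wt_def hs_weight_def hs_weight_nonneg)
    also have "\<dots> \<le> 1 / real n powr (2 * r)"
      using pos by (intro divide_left_mono) (auto intro!: mult_pos_pos add_pos_pos)
    also have "\<dots> = real n powr (- 2 * r)"
      by (simp add: powr_minus divide_inverse)
    finally show "norm (g n) \<le> real n powr (- 2 * r)" .
  qed
  then have gs: "g summable_on UNIV"
    by (rule summable_nonneg_imp_summable_on) (simp add: g_def Wt_def hs_weight_nonneg add_nonneg_nonneg)
  have A: "(\<lambda>k. 1 / Wt r k) summable_on (range int)"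
    by (subst summable_on_reindex) (auto simp: o_def g_def[symmetric] gs)
  have B: "(\<lambda>k. 1 / Wt r k) summable_on (range (\<lambda>n. - int n))"
    by (subst summable_on_reindex) (auto simp: inj_on_def o_def Wt_abs g_def[symmetric] gs)
  have U: "range int \<union> range (\<lambda>n. - int n) = (UNIV :: int set)"
  proof (rule set_eqI, simp)
    fix x :: int show "x \<in> range int \<or> x \<in> range (\<lambda>n. - int n)"
      by (cases "x \<ge> 0") (auto simp: image_iff intro: exI[of _ "nat x"] exI[of _ "nat (- x)"])
  qed
  show ?thesis using summable_on_union[OF A B] U by simp
qed

definition cR :: "real \<Rightarrow> real" where
  "cR r = sqrt (\<Sum>\<^sub>\<infinity>k. 1 / Wt r k)"

lemma hs_norm_Wt: "hs_norm r f = sqrt (\<Sum>\<^sub>\<infinity>k. Wt r k * (cmod (f k))\<^sup>2)"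
  by (simp add: hs_norm_def Wt_def)

lemma hs_summable_Wt: "hs_summable r f \<longleftrightarrow> (\<lambda>k. Wt r k * (cmod (f k))\<^sup>2) summable_on UNIV"
  by (simp add: hs_summable_def Wt_def)

lemma hs_norm_nonneg: "0 \<le> hs_norm r f"
  unfolding hs_norm_Wt
  by (auto intro!: infsum_nonneg mult_nonneg_nonneg order_trans[OF _ Wt_ge1])

lemma finite_L2_le_hs:
  assumes "hs_summable r f" "finite X"
  shows "(\<Sum>k\<in>X. Wt r k * (cmod (f k))\<^sup>2) \<le> (hs_norm r f)\<^sup>2"
proof -
  have "(\<Sum>k\<in>X. Wt r k * (cmod (f k))\<^sup>2) \<le> (\<Sum>\<^sub>\<infinity>k. Wt r k * (cmod (f k))\<^sup>2)"
    using assms by (intro finite_sum_le_infsum) (auto simp: hs_summable_Wt intro!: mult_nonneg_nonneg order_trans[OF _ Wt_ge1])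
  also have "\<dots> = (hs_norm r f)\<^sup>2"
    unfolding hs_norm_Wt
    by (subst real_sqrt_pow2) (auto intro!: infsum_nonneg mult_nonneg_nonneg order_trans[OF _ Wt_ge1])
  finally show ?thesis .
qed

lemma l1_bound:
  assumes r: "r > 1/2" and f: "hs_summable r f" and X: "finite X"
  shows "(\<Sum>k\<in>X. cmod (f k)) \<le> cR r * hs_norm r f"
proof -
  have W0: "0 < Wt r k" for k using Wt_ge1[of r k] by simp
  have W1: "Wt r k \<noteq> 0" for k using W0[of k] by simp
  have "(\<Sum>k\<in>X. cmod (f k)) = (\<Sum>k\<in>X. \<bar>sqrt (Wt r k) * cmod (f k)\<bar> * \<bar>1 / sqrt (Wt r k)\<bar>)"
    using W0 by (intro sum.cong) (auto simp: abs_mult W1)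
  also have "\<dots> \<le> L2_set (\<lambda>k. sqrt (Wt r k) * cmod (f k)) X * L2_set (\<lambda>k. 1 / sqrt (Wt r k)) X"
    by (rule L2_set_mult_ineq)
  also have "\<dots> \<le> hs_norm r f * cR r"
  proof (rule mult_mono)
    have "L2_set (\<lambda>k. sqrt (Wt r k) * cmod (f k)) X = sqrt (\<Sum>k\<in>X. Wt r k * (cmod (f k))\<^sup>2)"
      unfolding L2_set_def using W0 by (intro arg_cong[where f=sqrt] sum.cong) (auto simp: power_mult_distrib less_imp_le)
    also have "\<dots> \<le> sqrt ((hs_norm r f)\<^sup>2)"
      using finite_L2_le_hs[OF f X] by (rule real_sqrt_le_mono)
    also have "\<dots> = hs_norm r f" by (simp add: hs_norm_nonneg)
    finally show "L2_set (\<lambda>k. sqrt (Wt r k) * cmod (f k)) X \<le> hs_norm r f" .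
    have "L2_set (\<lambda>k. 1 / sqrt (Wt r k)) X = sqrt (\<Sum>k\<in>X. 1 / Wt r k)"
      unfolding L2_set_def using W0 by (intro arg_cong[where f=sqrt] sum.cong) (auto simp: power_divide less_imp_le)
    also have "\<dots> \<le> cR r"
      unfolding cR_def using inv_Wt_summable[OF r] X W0
      by (intro real_sqrt_le_mono finite_sum_le_infsum) (auto simp: less_imp_le)
    finally show "L2_set (\<lambda>k. 1 / sqrt (Wt r k)) X \<le> cR r" .
  qed (auto simp: hs_norm_nonneg cR_def)
  finally show ?thesis by (simp add: mult.commute)
qed

lemma wCS:
  fixes a y :: "'a \<Rightarrow> real"
  assumes "\<And>x. x \<in> S \<Longrightarrow> 0 \<le> y x"
  shows "(\<Sum>x\<in>S. a x * y x)\<^sup>2 \<le> (\<Sum>x\<in>S. (a x)\<^sup>2 * y x) * (\<Sum>x\<in>S. y x)"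
proof -
  have "(\<Sum>x\<in>S. a x * y x) = (\<Sum>x\<in>S. (a x * sqrt (y x)) * sqrt (y x))"
    using assms by (intro sum.cong) (auto simp: mult.assoc)
  also have "(\<dots>)\<^sup>2 \<le> (\<Sum>x\<in>S. (a x * sqrt (y x))\<^sup>2) * (\<Sum>x\<in>S. (sqrt (y x))\<^sup>2)"
    by (rule Cauchy_Schwarz_ineq_sum)
  also have "\<dots> = (\<Sum>x\<in>S. (a x)\<^sup>2 * y x) * (\<Sum>x\<in>S. y x)"
    using assms by (intro arg_cong2[where f="(*)"] sum.cong) (auto simp: power_mult_distrib)
  finally show ?thesis .
qed

definition L1b :: "(int \<Rightarrow> real) \<Rightarrow> real \<Rightarrow> bool" where
  "L1b g G \<longleftrightarrow> (\<forall>x. 0 \<le> g x) \<and> (\<forall>X. finite X \<longrightarrow> sum g X \<le> G)"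

definition L2b :: "(int \<Rightarrow> real) \<Rightarrow> real \<Rightarrow> bool" where
  "L2b f A \<longleftrightarrow> (\<forall>x. 0 \<le> f x) \<and> 0 \<le> A \<and> (\<forall>X. finite X \<longrightarrow> (\<Sum>x\<in>X. (f x)\<^sup>2) \<le> A\<^sup>2)"

lemma L1b_nonneg: "L1b g G \<Longrightarrow> 0 \<le> G"
  unfolding L1b_def by (metis finite.emptyI sum.empty)

lemma triple_prod_sum:
  fixes f g h :: "int \<Rightarrow> real"
  shows "(\<Sum>y\<in>P1 \<times> P2 \<times> P3. f (fst y) * g (fst (snd y)) * h (snd (snd y)))
         = sum f P1 * sum g P2 * sum h P3"
proof -
  have "sum f P1 * sum g P2 * sum h P3 = (\<Sum>a\<in>P1. f a * (sum g P2 * sum h P3))"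
    by (simp only: mult.assoc sum_distrib_right)
  also have "\<dots> = (\<Sum>a\<in>P1. \<Sum>b\<in>P2. \<Sum>c\<in>P3. f a * g b * h c)"
    by (intro sum.cong refl) (simp only: sum_distrib_left sum_distrib_right mult.assoc, rule sum.swap)
  finally have "(\<Sum>(a,b,c)\<in>P1 \<times> P2 \<times> P3. f a * g b * h c) = sum f P1 * sum g P2 * sum h P3"
    by (simp add: sum.cartesian_product[symmetric])
  then show ?thesis by (simp add: split_def)
qed

lemma slot_gen:
  fixes p q r K :: "int \<times> int \<times> int \<Rightarrow> int" and f g h :: "int \<Rightarrow> real"
  assumes E: "finite E" and F: "finite F"
    and f: "L2b f A" and g: "L1b g G" and h: "L1b h H"
    and injk: "\<And>k. inj_on (\<lambda>x. (q x, r x)) {x. K x = k}"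
    and injall: "inj (\<lambda>x. (p x, q x, r x))"
  shows "(\<Sum>k\<in>F. (\<Sum>x\<in>{x\<in>E. K x = k}. f (p x) * g (q x) * h (r x))\<^sup>2) \<le> (A*G*H)\<^sup>2"
proof -
  have fn: "0 \<le> f x" "0 \<le> g x" "0 \<le> h x" for x using f g h by (auto simp: L1b_def L2b_def)
  have G0: "0 \<le> G" and H0: "0 \<le> H" using g h by (auto intro: L1b_nonneg)
  have A0: "0 \<le> A" using f by (auto simp: L2b_def)
  define Ek where "Ek k = {x\<in>E. K x = k}" for k
  have Ekf: "finite (Ek k)" for k using E by (simp add: Ek_def)
  have step1: "(\<Sum>x\<in>Ek k. f (p x) * g (q x) * h (r x))\<^sup>2
      \<le> (\<Sum>x\<in>Ek k. (f (p x))\<^sup>2 * (g (q x) * h (r x))) * (\<Sum>x\<in>Ek k. g (q x) * h (r x))" for k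
    using wCS[of "Ek k" "\<lambda>x. g (q x) * h (r x)" "\<lambda>x. f (p x)"] fn
    by (simp add: mult.assoc)
  have step2: "(\<Sum>x\<in>Ek k. g (q x) * h (r x)) \<le> G * H" for k
  proof -
    have inj: "inj_on (\<lambda>x. (q x, r x)) (Ek k)"
      by (rule inj_on_subset[OF injk[of k]]) (auto simp: Ek_def)
    have "(\<Sum>x\<in>Ek k. g (q x) * h (r x)) = (\<Sum>y\<in>(\<lambda>x. (q x, r x)) ` Ek k. g (fst y) * h (snd y))"
      by (subst sum.reindex[OF inj]) simp
    also have "\<dots> \<le> (\<Sum>y\<in>q ` E \<times> r ` E. g (fst y) * h (snd y))"
      using E fn by (intro sum_mono2) (auto simp: Ek_def intro!: mult_nonneg_nonneg)
    also have "\<dots> = sum g (q ` E) * sum h (r ` E)"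
      by (simp add: sum.cartesian_product split_def sum_product)
    also have "\<dots> \<le> G * H"
      using g h E fn by (intro mult_mono) (auto simp: L1b_def intro!: sum_nonneg)
    finally show ?thesis .
  qed
  define \<Phi> where "\<Phi> x = (f (p x))\<^sup>2 * (g (q x) * h (r x))" for x
  have \<Phi>0: "0 \<le> \<Phi> x" for x using fn by (simp add: \<Phi>_def)
  have step3: "(\<Sum>k\<in>F. \<Sum>x\<in>Ek k. \<Phi> x) \<le> (\<Sum>x\<in>E. \<Phi> x)"
  proof -
    have "(\<Sum>k\<in>F. \<Sum>x\<in>Ek k. \<Phi> x) = (\<Sum>k\<in>F. \<Sum>x\<in>{x. x \<in> {x\<in>E. K x \<in> F} \<and> K x = k}. \<Phi> x)"
      by (intro sum.cong) (auto simp: Ek_def)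
    also have "\<dots> = (\<Sum>x\<in>{x\<in>E. K x \<in> F}. \<Phi> x)"
      using E F by (intro sum.group) auto
    also have "\<dots> \<le> (\<Sum>x\<in>E. \<Phi> x)"
      using E \<Phi>0 by (intro sum_mono2) auto
    finally show ?thesis .
  qed
  have step4: "(\<Sum>x\<in>E. \<Phi> x) \<le> A\<^sup>2 * G * H"
  proof -
    have "(\<Sum>x\<in>E. \<Phi> x) = (\<Sum>y\<in>(\<lambda>x. (p x, q x, r x)) ` E. (f (fst y))\<^sup>2 * g (fst (snd y)) * h (snd (snd y)))"
      by (subst sum.reindex[OF inj_on_subset[OF injall]]) (auto simp: \<Phi>_def mult.assoc)
    also have "\<dots> \<le> (\<Sum>y\<in>p ` E \<times> q ` E \<times> r ` E. (f (fst y))\<^sup>2 * g (fst (snd y)) * h (snd (snd y)))"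
      using E fn by (intro sum_mono2) (auto intro!: mult_nonneg_nonneg)
    also have "\<dots> = (\<Sum>x\<in>p ` E. (f x)\<^sup>2) * sum g (q ` E) * sum h (r ` E)"
      by (rule triple_prod_sum)
    also have "\<dots> \<le> A\<^sup>2 * G * H"
      using f g h E fn by (intro mult_mono) (auto simp: L1b_def L2b_def intro!: sum_nonneg mult_nonneg_nonneg)
    finally show ?thesis .
  qed
  have "(\<Sum>k\<in>F. (\<Sum>x\<in>Ek k. f (p x) * g (q x) * h (r x))\<^sup>2)
      \<le> (\<Sum>k\<in>F. (\<Sum>x\<in>Ek k. \<Phi> x) * (G * H))"
  proof (rule sum_mono)
    fix k assume "k \<in> F"
    have "(\<Sum>x\<in>Ek k. f (p x) * g (q x) * h (r x))\<^sup>2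
      \<le> (\<Sum>x\<in>Ek k. \<Phi> x) * (\<Sum>x\<in>Ek k. g (q x) * h (r x))"
      using step1[of k] by (simp add: \<Phi>_def)
    also have "\<dots> \<le> (\<Sum>x\<in>Ek k. \<Phi> x) * (G * H)"
      using step2[of k] \<Phi>0 by (intro mult_left_mono sum_nonneg) auto
    finally show "(\<Sum>x\<in>Ek k. f (p x) * g (q x) * h (r x))\<^sup>2 \<le> (\<Sum>x\<in>Ek k. \<Phi> x) * (G * H)" .
  qed
  also have "\<dots> = (\<Sum>k\<in>F. \<Sum>x\<in>Ek k. \<Phi> x) * (G * H)"
    by (simp add: sum_distrib_right)
  also have "\<dots> \<le> (A\<^sup>2 * G * H) * (G * H)"
    using step3 step4 G0 H0 by (intro mult_right_mono) auto
  also have "\<dots> = (A*G*H)\<^sup>2" by (simp add: power2_eq_square)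
  finally show ?thesis by (simp add: Ek_def)
qed

definition Km :: "int \<times> int \<times> int \<Rightarrow> int" where
  "Km x = fst (snd x) + snd (snd x) - fst x"

definition Tsum :: "(int \<times> int \<times> int) set \<Rightarrow> (int \<Rightarrow> real) \<Rightarrow> (int \<Rightarrow> real) \<Rightarrow> (int \<Rightarrow> real) \<Rightarrow> int \<Rightarrow> real" where
  "Tsum E f g h k = (\<Sum>x\<in>{x\<in>E. Km x = k}. f (fst x) * g (fst (snd x)) * h (snd (snd x)))"

lemma L2_from_sq:
  assumes "(\<Sum>k\<in>F. (u k)\<^sup>2) \<le> B\<^sup>2" "0 \<le> B"
  shows "L2_set u F \<le> B"
  unfolding L2_set_def using assms real_sqrt_le_mono[OF assms(1)] by simp

lemma L2bA: "L2b f A \<Longrightarrow> 0 \<le> A" by (simp add: L2b_def)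

lemma slot1:
  assumes E: "finite E" and F: "finite F" and f: "L2b f A" and g: "L1b g G" and h: "L1b h H"
  shows "L2_set (Tsum E f g h) F \<le> A * G * H"
proof (rule L2_from_sq)
  show "(\<Sum>k\<in>F. (Tsum E f g h k)\<^sup>2) \<le> (A * G * H)\<^sup>2"
    unfolding Tsum_def
    by (rule slot_gen[OF E F f g h, of "\<lambda>x. fst (snd x)" "\<lambda>x. snd (snd x)" Km fst])
      (auto simp: inj_on_def Km_def prod_eq_iff)
  show "0 \<le> A * G * H" using L2bA[OF f] L1b_nonneg[OF g] L1b_nonneg[OF h] by simp
qed

lemma slot2:
  assumes E: "finite E" and F: "finite F" and f: "L1b f G" and g: "L2b g A" and h: "L1b h H"
  shows "L2_set (Tsum E f g h) F \<le> A * G * H"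
proof (rule L2_from_sq)
  have "(\<Sum>k\<in>F. (\<Sum>x\<in>{x\<in>E. Km x = k}. g (fst (snd x)) * f (fst x) * h (snd (snd x)))\<^sup>2) \<le> (A * G * H)\<^sup>2"
    by (rule slot_gen[OF E F g f h, of fst "\<lambda>x. snd (snd x)" Km "\<lambda>x. fst (snd x)"])
      (auto simp: inj_on_def Km_def prod_eq_iff)
  then show "(\<Sum>k\<in>F. (Tsum E f g h k)\<^sup>2) \<le> (A * G * H)\<^sup>2"
    unfolding Tsum_def by (simp add: mult.commute mult.left_commute)
  show "0 \<le> A * G * H" using L2bA[OF g] L1b_nonneg[OF f] L1b_nonneg[OF h] by simp
qed

lemma slot3:
  assumes E: "finite E" and F: "finite F" and f: "L1b f G" and g: "L1b g H" and h: "L2b h A"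
  shows "L2_set (Tsum E f g h) F \<le> A * G * H"
proof (rule L2_from_sq)
  have "(\<Sum>k\<in>F. (\<Sum>x\<in>{x\<in>E. Km x = k}. h (snd (snd x)) * f (fst x) * g (fst (snd x)))\<^sup>2) \<le> (A * G * H)\<^sup>2"
    by (rule slot_gen[OF E F h f g, of fst "\<lambda>x. fst (snd x)" Km "\<lambda>x. snd (snd x)"])
      (auto simp: inj_on_def Km_def prod_eq_iff)
  then show "(\<Sum>k\<in>F. (Tsum E f g h k)\<^sup>2) \<le> (A * G * H)\<^sup>2"
    unfolding Tsum_def by (simp add: mult.commute mult.left_commute)
  show "0 \<le> A * G * H" using L2bA[OF h] L1b_nonneg[OF f] L1b_nonneg[OF g] by simp
qed

lemma L2b_mono: "L2b f A \<Longrightarrow> A \<le> B \<Longrightarrow> L2b f B"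
  unfolding L2b_def by (auto intro: order_trans power_mono)

lemma L1b_mono: "L1b f A \<Longrightarrow> A \<le> B \<Longrightarrow> L1b f B"
  unfolding L1b_def by (auto intro: order_trans)

lemma Tsum_nonneg:
  "(\<And>x. 0 \<le> f x) \<Longrightarrow> (\<And>x. 0 \<le> g x) \<Longrightarrow> (\<And>x. 0 \<le> h x) \<Longrightarrow> 0 \<le> Tsum E f g h k"
  unfolding Tsum_def by (intro sum_nonneg mult_nonneg_nonneg) auto

lemma Tsum_scale1: "Tsum E (\<lambda>x. c * f x) g h k = c * Tsum E f g h k"
  unfolding Tsum_def by (simp add: sum_distrib_left mult.assoc)
lemma Tsum_scale2: "Tsum E f (\<lambda>x. c * g x) h k = c * Tsum E f g h k"
  unfolding Tsum_def by (simp add: sum_distrib_left mult.assoc mult.left_commute)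
lemma Tsum_scale3: "Tsum E f g (\<lambda>x. c * h x) k = c * Tsum E f g h k"
  unfolding Tsum_def by (simp add: sum_distrib_left mult.assoc mult.left_commute)

lemma L2_sum3:
  assumes "\<And>k. k \<in> F \<Longrightarrow> 0 \<le> u k" "\<And>k. k \<in> F \<Longrightarrow> u k \<le> c * (a k + b k + d k)" "0 \<le> c"
  shows "L2_set u F \<le> c * (L2_set a F + L2_set b F + L2_set d F)"
proof -
  have "L2_set u F \<le> L2_set (\<lambda>k. c * (a k + b k + d k)) F"
    using assms by (intro L2_set_mono) auto
  also have "\<dots> = c * L2_set (\<lambda>k. (a k + b k) + d k) F"
    using assms by (simp add: L2_set_right_distrib)
  also have "\<dots> \<le> c * (L2_set (\<lambda>k. a k + b k) F + L2_set d F)"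
    using assms by (intro mult_left_mono L2_set_triangle_ineq) auto
  also have "\<dots> \<le> c * (L2_set a F + L2_set b F + L2_set d F)"
    using assms by (intro mult_left_mono) (auto intro: L2_set_triangle_ineq)
  finally show ?thesis .
qed

lemma cubic_const:
  assumes E: "finite E" and F: "finite F"
    and \<rho>: "\<And>k. \<rho> k = c" "0 \<le> c"
    and a: "L2b (\<lambda>k. \<rho> k * a k) Na" "\<And>k. 0 \<le> a k"
    and u: "L1b u Q" and v: "L1b v Q"
    and M: "1 \<le> M" and K: "1 \<le> K"
  shows "L2_set (\<lambda>k. \<rho> k * (Tsum E a u u k + Tsum E v a u k + Tsum E v v a k)) F \<le> 9 * M * K * Na * Q\<^sup>2"
proof -
  have un: "0 \<le> u x" "0 \<le> v x" for x using u v by (auto simp: L1b_def)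
  have eq: "\<rho> k * (Tsum E a u u k + Tsum E v a u k + Tsum E v v a k) =
     Tsum E (\<lambda>k. \<rho> k * a k) u u k + Tsum E v (\<lambda>k. \<rho> k * a k) u k + Tsum E v v (\<lambda>k. \<rho> k * a k) k" for k
    by (simp add: \<rho> Tsum_scale1 Tsum_scale2 Tsum_scale3 distrib_left)
  have "L2_set (\<lambda>k. \<rho> k * (Tsum E a u u k + Tsum E v a u k + Tsum E v v a k)) F \<le>
     1 * (L2_set (Tsum E (\<lambda>k. \<rho> k * a k) u u) F + L2_set (Tsum E v (\<lambda>k. \<rho> k * a k) u) F
          + L2_set (Tsum E v v (\<lambda>k. \<rho> k * a k)) F)"
    by (rule L2_sum3) (use \<rho> un a in \<open>auto simp: Tsum_scale1 Tsum_scale2 Tsum_scale3 distrib_left intro!: add_nonneg_nonneg Tsum_nonneg mult_nonneg_nonneg\<close>)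
  also have "\<dots> \<le> Na * Q * Q + Na * Q * Q + Na * Q * Q"
    using slot1[OF E F a(1) u u] slot2[OF E F v a(1) u] slot3[OF E F v v a(1)] by simp
  also have "\<dots> \<le> 9 * M * K * Na * Q\<^sup>2"
  proof -
    have Na0: "0 \<le> Na" using a L2bA by blast
    have "Na * Q * Q + Na * Q * Q + Na * Q * Q = 3 * (Na * Q\<^sup>2)" by (simp add: power2_eq_square)
    also have "\<dots> \<le> (9 * M * K) * (Na * Q\<^sup>2)"
    proof (rule mult_right_mono)
      have "1 \<le> M * K" using M K by (metis mult_mono' order.trans zero_le_one mult_1)
      then show "3 \<le> 9 * M * K" by linarith
    qed (use Na0 in simp)
    finally show ?thesis by (simp add: mult.assoc)
  qed
  finally show ?thesis .
qed

lemma cubic_weighted: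
  assumes E: "finite E" and F: "finite F"
    and \<rho>: "\<And>x. \<rho> (Km x) \<le> M * (\<rho> (fst x) + \<rho> (fst (snd x)) + \<rho> (snd (snd x)))" "\<And>k. 0 \<le> \<rho> k"
    and a: "L2b (\<lambda>k. \<rho> k * a k) Na" "L1b a (K * Na)"
    and u: "L1b u Q" "L2b (\<lambda>k. \<rho> k * u k) Q" and v: "L1b v Q" "L2b (\<lambda>k. \<rho> k * v k) Q"
    and M: "1 \<le> M" and K: "1 \<le> K"
  shows "L2_set (\<lambda>k. \<rho> k * (Tsum E a u u k + Tsum E v a u k + Tsum E v v a k)) F \<le> 9 * M * K * Na * Q\<^sup>2"
proof -
  have nn: "0 \<le> u x" "0 \<le> v x" "0 \<le> a x" for x using u v a by (auto simp: L1b_def)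
  have Na0: "0 \<le> Na" using a L2bA by blast
  have Q0: "0 \<le> Q" using u L1b_nonneg by blast
  define ra where "ra = (\<lambda>k. \<rho> k * a k)"
  define ru where "ru = (\<lambda>k. \<rho> k * u k)"
  define rv where "rv = (\<lambda>k. \<rho> k * v k)"
  have key: "\<rho> k * Tsum E f g h k \<le> M * (Tsum E (\<lambda>k. \<rho> k * f k) g h k + Tsum E f (\<lambda>k. \<rho> k * g k) h k
       + Tsum E f g (\<lambda>k. \<rho> k * h k) k)"
    if fn: "\<And>x. 0 \<le> f x" "\<And>x. 0 \<le> g x" "\<And>x. 0 \<le> h x" for f g h k
  proof -
    have "\<rho> k * Tsum E f g h k = (\<Sum>x\<in>{x\<in>E. Km x = k}. \<rho> (Km x) * (f (fst x) * g (fst (snd x)) * h (snd (snd x))))"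
      unfolding Tsum_def by (simp add: sum_distrib_left)
    also have "\<dots> \<le> (\<Sum>x\<in>{x\<in>E. Km x = k}. M * (\<rho> (fst x) + \<rho> (fst (snd x)) + \<rho> (snd (snd x))) * (f (fst x) * g (fst (snd x)) * h (snd (snd x))))"
      using \<rho> fn by (intro sum_mono mult_right_mono) auto
    also have "\<dots> = M * (Tsum E (\<lambda>k. \<rho> k * f k) g h k + Tsum E f (\<lambda>k. \<rho> k * g k) h k
       + Tsum E f g (\<lambda>k. \<rho> k * h k) k)"
      unfolding Tsum_def by (simp add: sum_distrib_left sum.distrib algebra_simps)
    finally show ?thesis .
  qed
  have pt: "\<rho> k * (Tsum E a u u k + Tsum E v a u k + Tsum E v v a k) \<le>
     M * ((Tsum E ra u u k + Tsum E a ru u k + Tsum E a u ru k) +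
          (Tsum E rv a u k + Tsum E v ra u k + Tsum E v a ru k) +
          (Tsum E rv v a k + Tsum E v rv a k + Tsum E v v ra k))" for k
    using key[of a u u k] key[of v a u k] key[of v v a k] nn
    unfolding ra_def ru_def rv_def by (simp add: distrib_left distrib_right)
  have r0: "0 \<le> ra x" "0 \<le> ru x" "0 \<le> rv x" for x using nn \<rho> by (auto simp: ra_def ru_def rv_def)
  have "L2_set (\<lambda>k. \<rho> k * (Tsum E a u u k + Tsum E v a u k + Tsum E v v a k)) F \<le>
     M * (L2_set (\<lambda>k. Tsum E ra u u k + Tsum E a ru u k + Tsum E a u ru k) F +
          L2_set (\<lambda>k. Tsum E rv a u k + Tsum E v ra u k + Tsum E v a ru k) F +
          L2_set (\<lambda>k. Tsum E rv v a k + Tsum E v rv a k + Tsum E v v ra k) F)"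
    by (rule L2_sum3) (use pt nn \<rho> M in \<open>auto intro!: add_nonneg_nonneg Tsum_nonneg mult_nonneg_nonneg\<close>)
  also have "\<dots> \<le> M * ((Na * Q * Q + Q * (K * Na) * Q + Q * (K * Na) * Q) +
                      (Q * (K * Na) * Q + Na * Q * Q + Q * (K * Na) * Q) +
                      (Q * (K * Na) * Q + Q * (K * Na) * Q + Na * Q * Q))"
  proof -
    have ra: "L2b ra Na" and ru: "L2b ru Q" and rv: "L2b rv Q"
      using a u v by (simp_all add: ra_def ru_def rv_def)
    have b1: "L2_set (\<lambda>k. Tsum E ra u u k + Tsum E a ru u k + Tsum E a u ru k) F \<le> Na * Q * Q + Q * (K * Na) * Q + Q * (K * Na) * Q"
      using L2_sum3[of F "\<lambda>k. Tsum E ra u u k + Tsum E a ru u k + Tsum E a u ru k" 1 "Tsum E ra u u" "Tsum E a ru u" "Tsum E a u ru", OF add_nonneg_nonneg[OF add_nonneg_nonneg[OF Tsum_nonneg Tsum_nonneg] Tsum_nonneg]]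
        slot1[OF E F ra u(1) u(1)] slot2[OF E F a(2) ru u(1)] slot3[OF E F a(2) u(1) ru] r0 nn
      by (auto simp: mult_ac)
    have b2: "L2_set (\<lambda>k. Tsum E rv a u k + Tsum E v ra u k + Tsum E v a ru k) F \<le> Q * (K * Na) * Q + Na * Q * Q + Q * (K * Na) * Q"
      using L2_sum3[of F "\<lambda>k. Tsum E rv a u k + Tsum E v ra u k + Tsum E v a ru k" 1 "Tsum E rv a u" "Tsum E v ra u" "Tsum E v a ru", OF add_nonneg_nonneg[OF add_nonneg_nonneg[OF Tsum_nonneg Tsum_nonneg] Tsum_nonneg]]
        slot1[OF E F rv a(2) u(1)] slot2[OF E F v(1) ra u(1)] slot3[OF E F v(1) a(2) ru] r0 nn
      by (auto simp: mult_ac)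
    have b3: "L2_set (\<lambda>k. Tsum E rv v a k + Tsum E v rv a k + Tsum E v v ra k) F \<le> Q * (K * Na) * Q + Q * (K * Na) * Q + Na * Q * Q"
      using L2_sum3[of F "\<lambda>k. Tsum E rv v a k + Tsum E v rv a k + Tsum E v v ra k" 1 "Tsum E rv v a" "Tsum E v rv a" "Tsum E v v ra", OF add_nonneg_nonneg[OF add_nonneg_nonneg[OF Tsum_nonneg Tsum_nonneg] Tsum_nonneg]]
        slot1[OF E F rv v(1) a(2)] slot2[OF E F v(1) rv a(2)] slot3[OF E F v(1) v(1) ra] r0 nn
      by (auto simp: mult_ac)
    show ?thesis using b1 b2 b3 M by (intro mult_left_mono) auto
  qed
  also have "\<dots> \<le> M * (9 * (K * Na * Q\<^sup>2))"
  proof (rule mult_left_mono)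
    have "Na * Q * Q \<le> K * Na * Q\<^sup>2" using mult_right_mono[OF K, of "Na*Q*Q"] Na0 Q0
      by (simp add: power2_eq_square mult_ac)
    then show "(Na * Q * Q + Q * (K * Na) * Q + Q * (K * Na) * Q) +
          (Q * (K * Na) * Q + Na * Q * Q + Q * (K * Na) * Q) +
          (Q * (K * Na) * Q + Q * (K * Na) * Q + Na * Q * Q) \<le> 9 * (K * Na * Q\<^sup>2)"
      by (simp add: power2_eq_square mult_ac)
  qed (use M in auto)
  also have "\<dots> = 9 * M * K * Na * Q\<^sup>2" by (simp add: mult_ac)
  finally show ?thesis .
qed

lemma Wt_nat: "Wt (real s) k = 1 + \<bar>real_of_int k\<bar> ^ (2 * s)"
  by (simp add: Wt_def hs_weight_nat power_even_abs)

lemma max3_pow_le: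
  fixes A B C :: real
  assumes "0 \<le> A" "0 \<le> B" "0 \<le> C"
  shows "(max A (max B C)) ^ n \<le> A ^ n + B ^ n + C ^ n"
  using assms by (auto simp: max_def add_increasing add_increasing2)

lemma Wt_Km:
  "sqrt (Wt (real s) (Km x)) \<le> 3 ^ s * (sqrt (Wt (real s) (fst x)) + sqrt (Wt (real s) (fst (snd x))) + sqrt (Wt (real s) (snd (snd x))))"
proof -
  obtain a b c where x: "x = (a, b, c)" by (metis prod.exhaust)
  define A where "A = \<bar>real_of_int a\<bar>"
  define B where "B = \<bar>real_of_int b\<bar>"
  define C where "C = \<bar>real_of_int c\<bar>"
  define m where "m = max A (max B C)"
  have nn: "0 \<le> A" "0 \<le> B" "0 \<le> C" by (auto simp: A_def B_def C_def)
  have "\<bar>real_of_int (Km x)\<bar> \<le> A + B + C"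
    by (simp add: x Km_def A_def B_def C_def)
  also have "\<dots> \<le> 3 * m" by (simp add: m_def)
  finally have km: "\<bar>real_of_int (Km x)\<bar> \<le> 3 * m" .
  have "\<bar>real_of_int (Km x)\<bar> ^ (2 * s) \<le> (3 * m) ^ (2 * s)"
    by (rule power_mono[OF km]) simp
  also have "\<dots> = 9 ^ s * m ^ (2 * s)"
    by (simp add: power_mult_distrib power_mult)
  also have "\<dots> \<le> 9 ^ s * (A ^ (2 * s) + B ^ (2 * s) + C ^ (2 * s))"
    using max3_pow_le[OF nn] by (simp add: m_def)
  finally have k1: "\<bar>real_of_int (Km x)\<bar> ^ (2 * s) \<le> 9 ^ s * (A ^ (2 * s) + B ^ (2 * s) + C ^ (2 * s))" .
  have p1: "(1::real) \<le> 9 ^ s" by simp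
  have wb: "Wt (real s) (Km x) \<le> 9 ^ s * ((1 + A ^ (2 * s)) + (1 + B ^ (2 * s)) + (1 + C ^ (2 * s)))"
    using k1 nn unfolding Wt_nat by (simp add: algebra_simps) (insert p1, linarith)
  have nine: "sqrt (9 ^ s) = (3::real) ^ s"
  proof -
    have "((3::real) ^ s)\<^sup>2 = (3\<^sup>2) ^ s" unfolding power_mult[symmetric] by (simp only: mult.commute)
    then have "(9::real) ^ s = (3 ^ s)\<^sup>2" by simp
    then show ?thesis by simp
  qed
  have SS: "sqrt ((1 + A ^ (2 * s)) + (1 + B ^ (2 * s)) + (1 + C ^ (2 * s))) \<le>
     sqrt (1 + A ^ (2 * s)) + sqrt (1 + B ^ (2 * s)) + sqrt (1 + C ^ (2 * s))"
  proof -
    have a: "0 \<le> 1 + A ^ (2 * s)" "0 \<le> 1 + B ^ (2 * s)" "0 \<le> 1 + C ^ (2 * s)" using nn by auto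
    have i1: "sqrt ((1 + A ^ (2 * s)) + (1 + B ^ (2 * s)) + (1 + C ^ (2 * s))) \<le>
       sqrt ((1 + A ^ (2 * s)) + (1 + B ^ (2 * s))) + sqrt (1 + C ^ (2 * s))"
      using a by (intro sqrt_add_le_add_sqrt) auto
    have i2: "sqrt ((1 + A ^ (2 * s)) + (1 + B ^ (2 * s))) \<le> sqrt (1 + A ^ (2 * s)) + sqrt (1 + B ^ (2 * s))"
      using a by (intro sqrt_add_le_add_sqrt) auto
    show ?thesis using i1 i2 by linarith
  qed
  from wb have "sqrt (Wt (real s) (Km x)) \<le> sqrt (9 ^ s) * sqrt ((1 + A ^ (2 * s)) + (1 + B ^ (2 * s)) + (1 + C ^ (2 * s)))"
    by (metis real_sqrt_le_mono real_sqrt_mult)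
  also have "\<dots> \<le> 3 ^ s * (sqrt (1 + A ^ (2 * s)) + sqrt (1 + B ^ (2 * s)) + sqrt (1 + C ^ (2 * s)))"
    unfolding nine by (intro mult_left_mono SS) simp
  finally show ?thesis
    by (simp add: x Wt_nat A_def B_def C_def mult_left_mono)
qed

lemma Wt_le2:
  fixes s :: nat
  assumes g: "0 \<le> \<gamma>" and sg: "real s + \<gamma> > 1/2"
  shows "Wt (real s) k \<le> 2 * Wt (real s + \<gamma>) k"
proof (cases "k = 0")
  case True
  have "hs_weight (real s) 0 \<le> 1" by (simp add: hs_weight_def)
  moreover have "hs_weight (real s + \<gamma>) 0 = 0" using sg by (simp add: hs_weight_def)
  ultimately show ?thesis using True by (simp add: Wt_def)
next
  case False
  then have k1: "1 \<le> \<bar>real_of_int k\<bar>" by linarith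
  have "hs_weight (real s) k = \<bar>real_of_int k\<bar> powr (2 * real s)"
    using False by (simp add: hs_weight_def)
  also have "\<dots> \<le> \<bar>real_of_int k\<bar> powr (2 * (real s + \<gamma>))"
    using k1 g by (intro powr_mono) auto
  also have "\<dots> = hs_weight (real s + \<gamma>) k" using False by (simp add: hs_weight_def)
  finally show ?thesis using hs_weight_nonneg[of "real s + \<gamma>" k] by (simp add: Wt_def)
qed

lemma hs_summable_diff:
  fixes s :: nat
  assumes g: "0 \<le> \<gamma>" and sg: "real s + \<gamma> > 1/2"
    and w: "hs_summable (real s + \<gamma>) w" and z: "hs_summable (real s + \<gamma>) z"
  shows "hs_summable (real s) (w - z)"
  unfolding hs_summable_Wt
proof (rule summable_on_comparison_test)
  let ?\<sigma> = "real s + \<gamma>"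
  show "(\<lambda>k. 4 * (Wt ?\<sigma> k * (cmod (w k))\<^sup>2) + 4 * (Wt ?\<sigma> k * (cmod (z k))\<^sup>2)) summable_on UNIV"
    using w z unfolding hs_summable_Wt by (intro summable_on_add summable_on_cmult_right)
  fix k :: int
  show "0 \<le> Wt (real s) k * (cmod ((w - z) k))\<^sup>2"
    using Wt_ge1[of "real s" k] by simp
  have W: "Wt (real s) k \<le> 2 * Wt ?\<sigma> k" by (rule Wt_le2[OF g sg])
  have n: "(cmod (w k - z k))\<^sup>2 \<le> 2 * (cmod (w k))\<^sup>2 + 2 * (cmod (z k))\<^sup>2"
  proof -
    have "cmod (w k - z k) \<le> cmod (w k) + cmod (z k)" by (rule norm_triangle_ineq4)
    then have "(cmod (w k - z k))\<^sup>2 \<le> (cmod (w k) + cmod (z k))\<^sup>2"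
      by (intro power_mono) auto
    also have "\<dots> \<le> 2 * (cmod (w k))\<^sup>2 + 2 * (cmod (z k))\<^sup>2"
      using power2_sum[of "cmod (w k)" "cmod (z k)"] power2_diff[of "cmod (w k)" "cmod (z k)"]
        zero_le_power2[of "cmod (w k) - cmod (z k)"] by linarith
    finally show ?thesis .
  qed
  have "Wt (real s) k * (cmod ((w - z) k))\<^sup>2 \<le> (2 * Wt ?\<sigma> k) * (2 * (cmod (w k))\<^sup>2 + 2 * (cmod (z k))\<^sup>2)"
    using W n Wt_ge1[of "real s" k] by (intro mult_mono) auto
  then show "Wt (real s) k * (cmod ((w - z) k))\<^sup>2 \<le> 4 * (Wt ?\<sigma> k * (cmod (w k))\<^sup>2) + 4 * (Wt ?\<sigma> k * (cmod (z k))\<^sup>2)"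
    by (simp add: algebra_simps)
qed

lemma L2b_weighted:
  fixes s :: nat
  assumes g: "0 \<le> \<gamma>" and sg: "real s + \<gamma> > 1/2" and w: "hs_summable (real s + \<gamma>) w"
  shows "L2b (\<lambda>k. sqrt (Wt (real s) k) * cmod (w k)) (sqrt 2 * hs_norm (real s + \<gamma>) w)"
  unfolding L2b_def
proof (intro conjI allI impI)
  fix X :: "int set" assume X: "finite X"
  have "(\<Sum>k\<in>X. (sqrt (Wt (real s) k) * cmod (w k))\<^sup>2) = (\<Sum>k\<in>X. Wt (real s) k * (cmod (w k))\<^sup>2)"
    by (intro sum.cong refl) (simp add: power_mult_distrib Wt_nonneg)
  also have "\<dots> \<le> (\<Sum>k\<in>X. 2 * (Wt (real s + \<gamma>) k * (cmod (w k))\<^sup>2))"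
    by (intro sum_mono, subst mult.assoc[symmetric], rule mult_right_mono[OF Wt_le2[OF g sg]], simp)
  also have "\<dots> = 2 * (\<Sum>k\<in>X. Wt (real s + \<gamma>) k * (cmod (w k))\<^sup>2)"
    by (simp add: sum_distrib_left)
  also have "\<dots> \<le> 2 * (hs_norm (real s + \<gamma>) w)\<^sup>2"
    using finite_L2_le_hs[OF w X] by simp
  also have "\<dots> = (sqrt 2 * hs_norm (real s + \<gamma>) w)\<^sup>2"
    by (simp add: power_mult_distrib)
  finally show "(\<Sum>k\<in>X. (sqrt (Wt (real s) k) * cmod (w k))\<^sup>2) \<le> (sqrt 2 * hs_norm (real s + \<gamma>) w)\<^sup>2" .
qed (auto simp: hs_norm_nonneg Wt_nonneg)

lemma L2b_plain:
  assumes "hs_summable r f"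
  shows "L2b (\<lambda>k. sqrt (Wt r k) * cmod (f k)) (hs_norm r f)"
  unfolding L2b_def
proof (intro conjI allI impI)
  fix X :: "int set" assume X: "finite X"
  have "(\<Sum>k\<in>X. (sqrt (Wt r k) * cmod (f k))\<^sup>2) = (\<Sum>k\<in>X. Wt r k * (cmod (f k))\<^sup>2)"
    by (intro sum.cong refl) (simp add: power_mult_distrib Wt_nonneg)
  also have "\<dots> \<le> (hs_norm r f)\<^sup>2" by (rule finite_L2_le_hs[OF assms X])
  finally show "(\<Sum>k\<in>X. (sqrt (Wt r k) * cmod (f k))\<^sup>2) \<le> (hs_norm r f)\<^sup>2" .
qed (auto simp: hs_norm_nonneg Wt_nonneg)

lemma L1b_cmod:
  assumes "r > 1/2" "hs_summable r f"
  shows "L1b (\<lambda>k. cmod (f k)) (cR r * hs_norm r f)"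
  unfolding L1b_def using l1_bound[OF assms] by auto

lemma triple_summable:
  fixes f1 f2 f3 :: "int \<Rightarrow> real"
  assumes "L1b f1 G1" "L1b f2 G2" "L1b f3 G3"
  shows "(\<lambda>x. f1 (fst x) * f2 (fst (snd x)) * f3 (snd (snd x))) summable_on A"
proof (rule nonneg_bdd_above_summable_on)
  have nn: "0 \<le> f1 x" "0 \<le> f2 x" "0 \<le> f3 x" for x using assms by (auto simp: L1b_def)
  show "0 \<le> f1 (fst x) * f2 (fst (snd x)) * f3 (snd (snd x))" for x using nn by simp
  show "bdd_above (sum (\<lambda>x. f1 (fst x) * f2 (fst (snd x)) * f3 (snd (snd x))) ` {F. F \<subseteq> A \<and> finite F})"
  proof (rule bdd_aboveI2)
    fix E assume "E \<in> {F. F \<subseteq> A \<and> finite F}"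
    then have E: "finite E" by simp
    have "(\<Sum>x\<in>E. f1 (fst x) * f2 (fst (snd x)) * f3 (snd (snd x))) \<le>
          (\<Sum>x\<in>fst ` E \<times> (\<lambda>x. fst (snd x)) ` E \<times> (\<lambda>x. snd (snd x)) ` E. f1 (fst x) * f2 (fst (snd x)) * f3 (snd (snd x)))"
    proof (rule sum_mono2)
      show "E \<subseteq> fst ` E \<times> (\<lambda>x. fst (snd x)) ` E \<times> (\<lambda>x. snd (snd x)) ` E"
      proof
        fix x assume xE: "x \<in> E"
        have "fst x \<in> fst ` E" "fst (snd x) \<in> (\<lambda>x. fst (snd x)) ` E" "snd (snd x) \<in> (\<lambda>x. snd (snd x)) ` E"
          using xE by auto
        then show "x \<in> fst ` E \<times> (\<lambda>x. fst (snd x)) ` E \<times> (\<lambda>x. snd (snd x)) ` E"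
          by (simp add: mem_Times_iff)
      qed
    qed (use E nn in \<open>auto intro!: mult_nonneg_nonneg\<close>)
    also have "\<dots> = sum f1 (fst ` E) * sum f2 ((\<lambda>x. fst (snd x)) ` E) * sum f3 ((\<lambda>x. snd (snd x)) ` E)"
      by (rule triple_prod_sum)
    also have "\<dots> \<le> G1 * G2 * G3"
      using assms E nn L1b_nonneg[OF assms(1)] L1b_nonneg[OF assms(2)] L1b_nonneg[OF assms(3)]
      by (intro mult_mono) (auto simp: L1b_def intro!: sum_nonneg mult_nonneg_nonneg)
    finally show "(\<Sum>x\<in>E. f1 (fst x) * f2 (fst (snd x)) * f3 (snd (snd x))) \<le> G1 * G2 * G3" .
  qed
qed

lemma cR_nonneg: "0 \<le> cR r"
  unfolding cR_def by (auto intro!: infsum_nonneg simp: Wt_nonneg)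

definition kap :: "nat \<Rightarrow> real \<Rightarrow> real" where
  "kap s \<gamma> = 2 + cR (real s + \<gamma>) + cR (real s)"

definition Cf :: "nat \<Rightarrow> real \<Rightarrow> real \<Rightarrow> real \<Rightarrow> real \<Rightarrow> real" where
  "Cf s \<gamma> lam x y = \<bar>lam\<bar> * 9 * 3 ^ s * (kap s \<gamma>) ^ 3 * (1 + x + y)\<^sup>2"

lemma cubic_bound:
  fixes s :: nat
  assumes g: "0 \<le> \<gamma>" and sg: "real s + \<gamma> > 1/2"
    and w: "hs_summable (real s + \<gamma>) w" and z: "hs_summable (real s + \<gamma>) z"
    and E: "finite E" and F: "finite F"
  shows "L2_set (\<lambda>k. sqrt (Wt (real s) k) * (Tsum E (\<lambda>k. cmod (w k - z k)) (\<lambda>k. cmod (w k)) (\<lambda>k. cmod (w k)) k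
      + Tsum E (\<lambda>k. cmod (z k)) (\<lambda>k. cmod (w k - z k)) (\<lambda>k. cmod (w k)) k
      + Tsum E (\<lambda>k. cmod (z k)) (\<lambda>k. cmod (z k)) (\<lambda>k. cmod (w k - z k)) k)) F
    \<le> 9 * 3 ^ s * kap s \<gamma> * hs_norm (real s) (w - z) * (kap s \<gamma> * (1 + hs_norm (real s + \<gamma>) w + hs_norm (real s + \<gamma>) z))\<^sup>2"
proof -
  define \<sigma> where "\<sigma> = real s + \<gamma>"
  define X where "X = hs_norm \<sigma> w"
  define Y where "Y = hs_norm \<sigma> z"
  define Na where "Na = hs_norm (real s) (w - z)"
  define \<kappa> where "\<kappa> = kap s \<gamma>"
  define Q where "Q = \<kappa> * (1 + X + Y)"
  have X0: "0 \<le> X" and Y0: "0 \<le> Y" and Na0: "0 \<le> Na" by (simp_all add: X_def Y_def Na_def hs_norm_nonneg)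
  have k2: "2 \<le> \<kappa>" using cR_nonneg[of \<sigma>] cR_nonneg[of "real s"] by (simp add: \<kappa>_def kap_def \<sigma>_def)
  have kc1: "cR \<sigma> \<le> \<kappa>" and kc2: "cR (real s) \<le> \<kappa>"
    using cR_nonneg[of \<sigma>] cR_nonneg[of "real s"] by (simp_all add: \<kappa>_def kap_def \<sigma>_def)
  have s2: "sqrt 2 \<le> \<kappa>" using k2 sqrt2_less_2 by linarith
  have XQ: "\<kappa> * X \<le> Q" and YQ: "\<kappa> * Y \<le> Q"
    using k2 X0 Y0 by (simp_all add: Q_def mult_left_mono)
  have sg': "\<sigma> > 1/2" using sg by (simp add: \<sigma>_def)
  have wz: "hs_summable (real s) (w - z)" by (rule hs_summable_diff[OF g sg w z])
  have u1: "L1b (\<lambda>k. cmod (w k)) Q"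
    by (rule L1b_mono[OF L1b_cmod[OF sg' w[folded \<sigma>_def]]])
      (use kc1 X0 XQ in \<open>simp add: X_def[symmetric], metis mult_right_mono order_trans\<close>)
  have v1: "L1b (\<lambda>k. cmod (z k)) Q"
    by (rule L1b_mono[OF L1b_cmod[OF sg' z[folded \<sigma>_def]]])
      (use kc1 Y0 YQ in \<open>simp add: Y_def[symmetric], metis mult_right_mono order_trans\<close>)
  have u2: "L2b (\<lambda>k. sqrt (Wt (real s) k) * cmod (w k)) Q"
    by (rule L2b_mono[OF L2b_weighted[OF g sg w]])
      (use s2 X0 XQ in \<open>simp add: X_def[symmetric] \<sigma>_def[symmetric], metis mult_right_mono order_trans\<close>)
  have v2: "L2b (\<lambda>k. sqrt (Wt (real s) k) * cmod (z k)) Q"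
    by (rule L2b_mono[OF L2b_weighted[OF g sg z]])
      (use s2 Y0 YQ in \<open>simp add: Y_def[symmetric] \<sigma>_def[symmetric], metis mult_right_mono order_trans\<close>)
  have a2: "L2b (\<lambda>k. sqrt (Wt (real s) k) * cmod (w k - z k)) Na"
    using L2b_plain[OF wz] by (simp add: Na_def)
  have k1: "1 \<le> \<kappa>" using k2 by simp
  show ?thesis
  proof (cases "s = 0")
    case True
    have "L2_set (\<lambda>k. sqrt (Wt (real s) k) * (Tsum E (\<lambda>k. cmod (w k - z k)) (\<lambda>k. cmod (w k)) (\<lambda>k. cmod (w k)) k
      + Tsum E (\<lambda>k. cmod (z k)) (\<lambda>k. cmod (w k - z k)) (\<lambda>k. cmod (w k)) k
      + Tsum E (\<lambda>k. cmod (z k)) (\<lambda>k. cmod (z k)) (\<lambda>k. cmod (w k - z k)) k)) F \<le> 9 * 1 * \<kappa> * Na * Q\<^sup>2"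
      by (rule cubic_const[OF E F _ _ a2 _ u1 v1 _ k1, of "sqrt 2"]) (auto simp: True Wt_def hs_weight_def)
    then show ?thesis using True by (simp add: \<kappa>_def Na_def Q_def X_def Y_def \<sigma>_def)
  next
    case False
    then have s1: "real s > 1/2" by simp
    have a1': "L1b (\<lambda>k. cmod (w k - z k)) (cR (real s) * Na)"
      using L1b_cmod[OF s1 wz] by (simp add: Na_def)
    have a1: "L1b (\<lambda>k. cmod (w k - z k)) (\<kappa> * Na)"
      by (rule L1b_mono[OF a1' mult_right_mono[OF kc2 Na0]])
    have "L2_set (\<lambda>k. sqrt (Wt (real s) k) * (Tsum E (\<lambda>k. cmod (w k - z k)) (\<lambda>k. cmod (w k)) (\<lambda>k. cmod (w k)) k
      + Tsum E (\<lambda>k. cmod (z k)) (\<lambda>k. cmod (w k - z k)) (\<lambda>k. cmod (w k)) k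
      + Tsum E (\<lambda>k. cmod (z k)) (\<lambda>k. cmod (z k)) (\<lambda>k. cmod (w k - z k)) k)) F \<le> 9 * 3 ^ s * \<kappa> * Na * Q\<^sup>2"
      by (rule cubic_weighted[OF E F Wt_Km _ a2 a1 u1 u2 v1 v2 _ k1]) (auto simp: Wt_nonneg)
    then show ?thesis by (simp add: \<kappa>_def Na_def Q_def X_def Y_def \<sigma>_def)
  qed
qed

lemma cmod_cnj_diff: "cmod (cnj a - cnj b) = cmod (a - b)"
  by (metis complex_cnj_diff complex_mod_cnj)

lemma cubic_diff_norm:
  fixes I w1 w2 w3 z1 z2 z3 :: complex
  shows "cmod (I * cnj w1 * w2 * w3 - I * cnj z1 * z2 * z3) \<le>
    cmod I * (cmod (w1 - z1) * cmod w2 * cmod w3 + cmod z1 * cmod (w2 - z2) * cmod w3 + cmod z1 * cmod z2 * cmod (w3 - z3))"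
proof -
  have "I * cnj w1 * w2 * w3 - I * cnj z1 * z2 * z3 =
        I * (cnj (w1 - z1) * w2 * w3 + cnj z1 * (w2 - z2) * w3 + cnj z1 * z2 * (w3 - z3))"
    by (simp add: algebra_simps)
  also have "cmod \<dots> \<le> cmod I * (cmod (cnj (w1 - z1) * w2 * w3) + cmod (cnj z1 * (w2 - z2) * w3) + cmod (cnj z1 * z2 * (w3 - z3)))"
    unfolding norm_mult[of I]
    by (intro mult_left_mono) (auto intro: order_trans[OF norm_triangle_ineq] add_mono)
  also have "\<dots> = cmod I * (cmod (w1 - z1) * cmod w2 * cmod w3 + cmod z1 * cmod (w2 - z2) * cmod w3 + cmod z1 * cmod z2 * cmod (w3 - z3))"
    by (simp add: norm_mult cmod_cnj_diff)
  finally show ?thesis .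
qed

lemma main_det:
  fixes s :: nat
  assumes g: "0 \<le> \<gamma>" and sg: "real s + \<gamma> > 1/2" and \<tau>0: "0 \<le> \<tau>"
    and w: "hs_summable (real s + \<gamma>) w" and z: "hs_summable (real s + \<gamma>) z"
  shows "hs_norm (real s) (Phi \<delta> R b lam N tn \<tau> w - Phi \<delta> R b lam N tn \<tau> z)
    \<le> (1 + \<tau> * Cf s \<gamma> lam (hs_norm (real s + \<gamma>) w) (hs_norm (real s + \<gamma>) z)) * hs_norm (real s) (w - z)"
proof -
  define \<sigma> where "\<sigma> = real s + \<gamma>"
  have sg': "\<sigma> > 1/2" using sg by (simp add: \<sigma>_def)
  define Ik where "Ik x = I_int \<delta> R b tn \<tau> ((of_int (fst x))\<^sup>2)" for x :: "int \<times> int \<times> int"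
  define tf where "tf f x = Ik x * cnj (f (fst x)) * f (fst (snd x)) * f (snd (snd x))"
    for f :: "int \<Rightarrow> complex" and x
  define Ak where "Ak k = {(k1, k2, k3). k + k1 = k2 + k3 \<and> inN N k1 \<and> inN N k2 \<and> inN N k3}" for k
  define th where "th k = cis (- (interpB \<delta> R b (tn + \<tau>) - interpB \<delta> R b tn) * (of_int k)\<^sup>2)" for k
  have Phi_eq: "Phi \<delta> R b lam N tn \<tau> f k = (if inN N k then th k * (f k + \<i> * complex_of_real lam * infsum (tf f) (Ak k)) else 0)" for f k
    unfolding Phi_def th_def Ak_def tf_def Ik_def by (simp add: split_def)
  have Ikb: "cmod (Ik x) \<le> \<tau>" for x unfolding Ik_def by (rule I_int_bound[OF \<tau>0])
  have summ: "tf f summable_on A" if f: "L1b (\<lambda>k. cmod (f k)) G" for f G A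
  proof (rule abs_summable_summable)
    have "(\<lambda>x. \<tau> * (cmod (f (fst x)) * cmod (f (fst (snd x))) * cmod (f (snd (snd x))))) summable_on A"
      by (intro summable_on_cmult_right triple_summable[OF f f f])
    then show "(\<lambda>x. norm (tf f x)) summable_on A"
    proof (rule summable_on_comparison_test)
      fix x
      show "norm (tf f x) \<le> \<tau> * (cmod (f (fst x)) * cmod (f (fst (snd x))) * cmod (f (snd (snd x))))"
        unfolding tf_def norm_mult complex_mod_cnj
        using Ikb[of x] by (simp add: mult.assoc mult_right_mono)
    qed simp
  qed
  have Lw: "L1b (\<lambda>k. cmod (w k)) (cR \<sigma> * hs_norm \<sigma> w)" by (rule L1b_cmod[OF sg' w[folded \<sigma>_def]])
  have Lz: "L1b (\<lambda>k. cmod (z k)) (cR \<sigma> * hs_norm \<sigma> z)" by (rule L1b_cmod[OF sg' z[folded \<sigma>_def]])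
  define S where "S k = infsum (tf w) (Ak k) - infsum (tf z) (Ak k)" for k
  define gk where "gk k x = (if x \<in> Ak k then tf w x - tf z x else 0)" for k x
  have hsum: "(gk k has_sum S k) UNIV" for k
  proof -
    have "((\<lambda>x. tf w x + -1 * tf z x) has_sum (infsum (tf w) (Ak k) + -1 * infsum (tf z) (Ak k))) (Ak k)"
      by (intro has_sum_add has_sum_cmult_right has_sum_infsum summ[OF Lw] summ[OF Lz])
    then show ?thesis unfolding S_def
      by (subst has_sum_cong_neutral[where T="Ak k" and g="\<lambda>x. tf w x + -1 * tf z x"]) (auto simp: gk_def)
  qed
  define D where "D = Phi \<delta> R b lam N tn \<tau> w - Phi \<delta> R b lam N tn \<tau> z"
  have Deq: "D k = (if inN N k then th k * ((w k - z k) + \<i> * complex_of_real lam * S k) else 0)" for k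
    by (simp add: D_def Phi_eq S_def algebra_simps)
  define a where "a k = cmod (w k - z k)" for k
  define u where "u k = cmod (w k)" for k
  define v where "v k = cmod (z k)" for k
  define Tk where "Tk E k = Tsum E a u u k + Tsum E v a u k + Tsum E v v a k" for E k
  have nn: "0 \<le> a k" "0 \<le> u k" "0 \<le> v k" for k by (simp_all add: a_def u_def v_def)
  have Tk0: "0 \<le> Tk E k" for E k unfolding Tk_def using nn by (intro add_nonneg_nonneg Tsum_nonneg) auto
  have gkb: "cmod (gk k x) \<le> (if Km x = k then \<tau> * (a (fst x) * u (fst (snd x)) * u (snd (snd x))
      + v (fst x) * a (fst (snd x)) * u (snd (snd x)) + v (fst x) * v (fst (snd x)) * a (snd (snd x))) else 0)" for k x
  proof (cases "x \<in> Ak k")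
    case True
    then have K: "Km x = k" by (auto simp: Ak_def Km_def)
    have "cmod (gk k x) \<le> cmod (Ik x) * (a (fst x) * u (fst (snd x)) * u (snd (snd x))
      + v (fst x) * a (fst (snd x)) * u (snd (snd x)) + v (fst x) * v (fst (snd x)) * a (snd (snd x)))"
      using True cubic_diff_norm[of "Ik x"] by (simp add: gk_def tf_def a_def u_def v_def)
    also have "\<dots> \<le> \<tau> * (a (fst x) * u (fst (snd x)) * u (snd (snd x))
      + v (fst x) * a (fst (snd x)) * u (snd (snd x)) + v (fst x) * v (fst (snd x)) * a (snd (snd x)))"
      using Ikb[of x] nn by (intro mult_right_mono) (auto intro!: add_nonneg_nonneg mult_nonneg_nonneg)
    finally show ?thesis using K by simp
  next
    case False
    then show ?thesis using nn \<tau>0 by (auto simp: gk_def intro!: add_nonneg_nonneg mult_nonneg_nonneg)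
  qed
  have sumb: "cmod (sum (gk k) E) \<le> \<tau> * Tk E k" if E: "finite E" for E k
  proof -
    have "cmod (sum (gk k) E) \<le> (\<Sum>x\<in>E. cmod (gk k x))" by (rule norm_sum)
    also have "\<dots> \<le> (\<Sum>x\<in>E. (if Km x = k then \<tau> * (a (fst x) * u (fst (snd x)) * u (snd (snd x))
      + v (fst x) * a (fst (snd x)) * u (snd (snd x)) + v (fst x) * v (fst (snd x)) * a (snd (snd x))) else 0))"
      by (intro sum_mono gkb)
    also have "\<dots> = (\<Sum>x\<in>{x\<in>E. Km x = k}. \<tau> * (a (fst x) * u (fst (snd x)) * u (snd (snd x))
      + v (fst x) * a (fst (snd x)) * u (snd (snd x)) + v (fst x) * v (fst (snd x)) * a (snd (snd x))))"
      by (rule sum.inter_filter[OF E, symmetric])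
    also have "\<dots> = \<tau> * Tk E k"
      unfolding Tk_def Tsum_def by (subst sum_distrib_left[symmetric]) (simp add: sum.distrib)
    finally show ?thesis .
  qed
  define DE where "DE E k = (if inN N k then th k * ((w k - z k) + \<i> * complex_of_real lam * sum (gk k) E) else 0)" for E k
  have DEb: "cmod (DE E k) \<le> a k + \<bar>lam\<bar> * \<tau> * Tk E k" if E: "finite E" for E k
  proof (cases "inN N k")
    case True
    have "cmod (DE E k) = cmod ((w k - z k) + \<i> * complex_of_real lam * sum (gk k) E)"
      using True by (simp add: DE_def th_def norm_mult)
    also have "\<dots> \<le> a k + \<bar>lam\<bar> * cmod (sum (gk k) E)"
      unfolding a_def by (rule order_trans[OF norm_triangle_ineq]) (simp add: norm_mult)
    also have "\<dots> \<le> a k + \<bar>lam\<bar> * (\<tau> * Tk E k)"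
      using sumb[OF E] by (intro add_left_mono mult_left_mono) auto
    finally show ?thesis by (simp add: mult.assoc)
  next
    case False
    then show ?thesis using nn Tk0 \<tau>0 by (simp add: DE_def)
  qed
  define \<rho> where "\<rho> k = sqrt (Wt (real s) k)" for k
  define X where "X = hs_norm (real s + \<gamma>) w"
  define Y where "Y = hs_norm (real s + \<gamma>) z"
  define Na where "Na = hs_norm (real s) (w - z)"
  define \<kappa> where "\<kappa> = kap s \<gamma>"
  define Bnd where "Bnd = (1 + \<tau> * Cf s \<gamma> lam X Y) * Na"
  have aeq: "a = (\<lambda>k. cmod (w k - z k))" by (simp add: fun_eq_iff a_def)
  have ueq: "u = (\<lambda>k. cmod (w k))" by (simp add: fun_eq_iff u_def)
  have veq: "v = (\<lambda>k. cmod (z k))" by (simp add: fun_eq_iff v_def)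
  have \<rho>0: "0 \<le> \<rho> k" for k by (simp add: \<rho>_def Wt_nonneg)
  have Na0: "0 \<le> Na" and X0: "0 \<le> X" and Y0: "0 \<le> Y" by (simp_all add: Na_def X_def Y_def hs_norm_nonneg)
  have \<kappa>0: "0 \<le> \<kappa>" using cR_nonneg[of "real s + \<gamma>"] cR_nonneg[of "real s"] by (simp add: \<kappa>_def kap_def)
  have Cf0: "0 \<le> Cf s \<gamma> lam X Y" using \<kappa>0 by (simp add: Cf_def \<kappa>_def[symmetric])
  have Bnd0: "0 \<le> Bnd" using Cf0 \<tau>0 Na0 by (simp add: Bnd_def)
  have wz: "hs_summable (real s) (w - z)" by (rule hs_summable_diff[OF g sg w z])
  have cb: "L2_set (\<lambda>k. \<rho> k * Tk E k) F \<le> 9 * 3 ^ s * \<kappa> * Na * (\<kappa> * (1 + X + Y))\<^sup>2"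
    if "finite E" "finite F" for E F
    using cubic_bound[OF g sg w z that] unfolding Tk_def aeq ueq veq \<rho>_def[abs_def] \<kappa>_def Na_def X_def Y_def .
  have L2a: "L2_set (\<lambda>k. \<rho> k * a k) F \<le> Na" for F
  proof (cases "finite F")
    case True
    have "L2b (\<lambda>k. \<rho> k * a k) Na" using L2b_plain[OF wz] by (simp add: \<rho>_def[abs_def] aeq Na_def)
    then show ?thesis using True by (intro L2_from_sq) (auto simp: L2b_def)
  qed (simp add: Na0)
  have L2DE: "L2_set (\<lambda>k. \<rho> k * cmod (DE E k)) F \<le> Bnd" if E: "finite E" and F: "finite F" for E F
  proof -
    have "L2_set (\<lambda>k. \<rho> k * cmod (DE E k)) F \<le> L2_set (\<lambda>k. \<rho> k * a k + (\<bar>lam\<bar> * \<tau>) * (\<rho> k * Tk E k)) F"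
    proof (rule L2_set_mono)
      fix k
      have "\<rho> k * cmod (DE E k) \<le> \<rho> k * (a k + \<bar>lam\<bar> * \<tau> * Tk E k)"
        by (intro mult_left_mono DEb[OF E] \<rho>0)
      then show "\<rho> k * cmod (DE E k) \<le> \<rho> k * a k + (\<bar>lam\<bar> * \<tau>) * (\<rho> k * Tk E k)"
        by (simp add: algebra_simps)
      show "0 \<le> \<rho> k * cmod (DE E k)" using \<rho>0 by simp
    qed
    also have "\<dots> \<le> L2_set (\<lambda>k. \<rho> k * a k) F + L2_set (\<lambda>k. (\<bar>lam\<bar> * \<tau>) * (\<rho> k * Tk E k)) F"
      by (rule L2_set_triangle_ineq)
    also have "\<dots> = L2_set (\<lambda>k. \<rho> k * a k) F + (\<bar>lam\<bar> * \<tau>) * L2_set (\<lambda>k. \<rho> k * Tk E k) F"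
      using \<tau>0 by (simp add: L2_set_right_distrib)
    also have "\<dots> \<le> Na + (\<bar>lam\<bar> * \<tau>) * (9 * 3 ^ s * \<kappa> * Na * (\<kappa> * (1 + X + Y))\<^sup>2)"
      using L2a cb[OF E F] \<tau>0 by (intro add_mono mult_left_mono) auto
    also have "\<dots> = Bnd"
      by (simp add: Bnd_def Cf_def \<kappa>_def[symmetric] power2_eq_square power3_eq_cube algebra_simps)
    finally show ?thesis .
  qed
  have DEt: "((\<lambda>E. DE E k) \<longlongrightarrow> D k) (finite_subsets_at_top UNIV)" for k
    using hsum[of k] unfolding has_sum_def DE_def Deq
    by (cases "inN N k") (auto intro!: tendsto_intros)
  have finF: "(\<Sum>k\<in>F. Wt (real s) k * (cmod (D k))\<^sup>2) \<le> Bnd\<^sup>2" if F: "finite F" for F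
  proof (rule tendsto_upperbound)
    show "((\<lambda>E. \<Sum>k\<in>F. Wt (real s) k * (cmod (DE E k))\<^sup>2) \<longlongrightarrow> (\<Sum>k\<in>F. Wt (real s) k * (cmod (D k))\<^sup>2)) (finite_subsets_at_top UNIV)"
      by (intro tendsto_sum tendsto_mult tendsto_const tendsto_power tendsto_norm DEt)
    show "\<not> trivial_limit (finite_subsets_at_top (UNIV :: (int \<times> int \<times> int) set))"
      by (rule finite_subsets_at_top_neq_bot)
    show "\<forall>\<^sub>F E in finite_subsets_at_top UNIV. (\<Sum>k\<in>F. Wt (real s) k * (cmod (DE E k))\<^sup>2) \<le> Bnd\<^sup>2"
    proof (rule eventually_finite_subsets_at_top_weakI)
      fix E :: "(int \<times> int \<times> int) set" assume E: "finite E"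
      have "(\<Sum>k\<in>F. Wt (real s) k * (cmod (DE E k))\<^sup>2) = (L2_set (\<lambda>k. \<rho> k * cmod (DE E k)) F)\<^sup>2"
        unfolding L2_set_def \<rho>_def
        by (subst real_sqrt_pow2) (auto intro!: sum_nonneg simp: power_mult_distrib Wt_nonneg)
      also have "\<dots> \<le> Bnd\<^sup>2"
        by (rule power_mono[OF L2DE[OF E F]]) simp
      finally show "(\<Sum>k\<in>F. Wt (real s) k * (cmod (DE E k))\<^sup>2) \<le> Bnd\<^sup>2" .
    qed
  qed
  have "hs_norm (real s) D \<le> Bnd"
  proof (cases "(\<lambda>k. Wt (real s) k * (cmod (D k))\<^sup>2) summable_on UNIV")
    case True
    have "(\<Sum>\<^sub>\<infinity>k. Wt (real s) k * (cmod (D k))\<^sup>2) \<le> Bnd\<^sup>2"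
      by (rule infsum_le_finite_sums[OF True finF]) 
    then have "sqrt (\<Sum>\<^sub>\<infinity>k. Wt (real s) k * (cmod (D k))\<^sup>2) \<le> sqrt (Bnd\<^sup>2)" by (rule real_sqrt_le_mono)
    then show ?thesis using Bnd0 by (simp add: hs_norm_Wt)
  next
    case False
    then show ?thesis using Bnd0 by (simp add: hs_norm_Wt infsum_not_exists)
  qed
  then show ?thesis by (simp add: D_def Bnd_def X_def Y_def Na_def)
qed

theorem proposition3p1:
  fixes s :: nat and \<gamma> T lam :: real and M :: "'a measure" and B :: "'a \<Rightarrow> real \<Rightarrow> real"
  assumes "\<gamma> \<ge> 0" and "real s + \<gamma> > 1/2" and "T > 0" and "lam \<noteq> 0"
    and "brownian_motion M B"
  shows "\<exists>C :: real \<Rightarrow> real \<Rightarrow> real.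
    (\<forall>x y. 0 \<le> x \<and> 0 \<le> y \<longrightarrow> 0 \<le> C x y) \<and>
    (\<forall>x x' y. 0 \<le> x \<and> x < x' \<and> 0 \<le> y \<longrightarrow> C x y < C x' y) \<and>
    (\<forall>x y y'. 0 \<le> x \<and> 0 \<le> y \<and> y < y' \<longrightarrow> C x y < C x y') \<and>
    (\<forall>(\<delta>::real) (R::ereal) (N::enat) (K::nat) (n::nat) z w.
       0 < \<delta> \<and> \<delta> < 1 \<and> 1 \<le> R \<and> 1 \<le> N \<and> 1 \<le> K \<and> n \<le> K - 1 \<and>
       in_piN N z \<and> in_piN N w \<and> hs_summable (real s + \<gamma>) z \<and> hs_summable (real s + \<gamma>) w \<longrightarrow>
       (let \<tau> = T / real K; tn = real n * \<tau> in
        AE \<omega> in M.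
          hs_norm (real s) (Phi \<delta> R (B \<omega>) lam N tn \<tau> w - Phi \<delta> R (B \<omega>) lam N tn \<tau> z)
          \<le> (1 + \<tau> * C (hs_norm (real s + \<gamma>) w) (hs_norm (real s + \<gamma>) z))
             * hs_norm (real s) (w - z)))"
proof (intro exI[of _ "Cf s \<gamma> lam"] conjI allI impI)
  have k0: "0 < kap s \<gamma>" using cR_nonneg[of "real s + \<gamma>"] cR_nonneg[of "real s"] by (simp add: kap_def)
  have c0: "0 < \<bar>lam\<bar> * 9 * 3 ^ s * (kap s \<gamma>) ^ 3" using assms(4) k0 by simp
  fix x y :: real
  show "0 \<le> x \<and> 0 \<le> y \<Longrightarrow> 0 \<le> Cf s \<gamma> lam x y"
    using c0 k0 unfolding Cf_def by (intro mult_nonneg_nonneg) auto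
  fix x' :: real
  show "0 \<le> x \<and> x < x' \<and> 0 \<le> y \<Longrightarrow> Cf s \<gamma> lam x y < Cf s \<gamma> lam x' y"
    unfolding Cf_def using c0 by (intro mult_strict_left_mono power_strict_mono) auto
next
  have k0: "0 < kap s \<gamma>" using cR_nonneg[of "real s + \<gamma>"] cR_nonneg[of "real s"] by (simp add: kap_def)
  have c0: "0 < \<bar>lam\<bar> * 9 * 3 ^ s * (kap s \<gamma>) ^ 3" using assms(4) k0 by simp
  fix x y y' :: real
  show "0 \<le> x \<and> 0 \<le> y \<and> y < y' \<Longrightarrow> Cf s \<gamma> lam x y < Cf s \<gamma> lam x y'"
    unfolding Cf_def using c0 by (intro mult_strict_left_mono power_strict_mono) auto
next
  fix \<delta> :: real and R :: ereal and N :: enat and K n :: nat and z w :: "int \<Rightarrow> complex"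
  assume h: "0 < \<delta> \<and> \<delta> < 1 \<and> 1 \<le> R \<and> 1 \<le> N \<and> 1 \<le> K \<and> n \<le> K - 1 \<and>
       in_piN N z \<and> in_piN N w \<and> hs_summable (real s + \<gamma>) z \<and> hs_summable (real s + \<gamma>) w"
  have \<tau>0: "0 \<le> T / real K" using assms(3) by simp
  show "let \<tau> = T / real K; tn = real n * \<tau> in
        AE \<omega> in M.
          hs_norm (real s) (Phi \<delta> R (B \<omega>) lam N tn \<tau> w - Phi \<delta> R (B \<omega>) lam N tn \<tau> z)
          \<le> (1 + \<tau> * Cf s \<gamma> lam (hs_norm (real s + \<gamma>) w) (hs_norm (real s + \<gamma>) z))
             * hs_norm (real s) (w - z)"
    unfolding Let_def
    by (intro AE_I2 main_det[OF assms(1) assms(2) \<tau>0]) (use h in auto)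
qed

end
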